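(* Let $G$ be a finite graph with a fixed orientation of each edge, and let $p\colon \widehat G\to G$ be its oriented edge double with involution $\sigma\colon\widehat G\to\widehat G$. Let $E_1,E_{-1}\subseteq H_1(\widehat G;\mathbb{R})$ be the eigenspaces of $\sigma_*$ for the eigenvalues $1$ and $-1$. Then $H_1(\widehat G;\mathbb{R})=E_1\oplus E_{-1}$, the map $p_*\colon H_1(\widehat G;\mathbb{R})\to H_1(G;\mathbb{R})$ restricts to an isomorphism $E_1\to H_1(G;\mathbb{R})$, and $\ker(p_* )=E_{-1}$, which is isomorphic to the space $C_1(G;\mathbb{R})$ of simplicial $1$-chains of $G$.
   Context: The oriented edge double of $G$ is the graph $\widehat G$ together with a map $p\colon\widehat G\to G$ that is a bijection on vertices and such that for each oriented edge $e$ of $G$ there are exactly two oriented edges $e_+,e_-$ of $\widehat G$ over it, with $p(e_+)=e$ and $p(e_-)=\overline e$ (here $\overline e$ denotes $e$ with reversed orientation). The involution $\sigma\colon\widehat G\to\widehat G$ is defined by $e_+\mapsto \overline{e_-}$ and $e_-\mapsto\overline{e_+}$; it satisfies $p\circ\sigma=p$. *)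

theory Defs
  imports "HOL-Analysis.Analysis" "HOL-Library.Function_Algebras" "Graph_Theory.Digraph"
begin

text \<open>A finite graph with a fixed orientation of each edge is a finite (multi)digraph
  in the sense of Graph_Theory: each arc e goes from tail G e to head G e.\<close>

definition chain_scale :: "real \<Rightarrow> ('b \<Rightarrow> real) \<Rightarrow> ('b \<Rightarrow> real)" where
  "chain_scale a c = (\<lambda>e. a * c e)"

definition C1 :: "('a, 'b) pre_digraph \<Rightarrow> ('b \<Rightarrow> real) set" where
  "C1 G = {c. \<forall>e. e \<notin> arcs G \<longrightarrow> c e = 0}"

definition boundary1 :: "('a, 'b) pre_digraph \<Rightarrow> ('b \<Rightarrow> real) \<Rightarrow> 'a \<Rightarrow> real" where
  "boundary1 G c v =
     (\<Sum>e\<in>{e\<in>arcs G. head G e = v}. c e) - (\<Sum>e\<in>{e\<in>arcs G. tail G e = v}. c e)"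

text \<open>H_1(G;R): a graph is a 1-dimensional complex (no 2-cells), so H_1 = Z_1 = ker of the boundary.\<close>
definition H1 :: "('a, 'b) pre_digraph \<Rightarrow> ('b \<Rightarrow> real) set" where
  "H1 G = {c \<in> C1 G. \<forall>v\<in>verts G. boundary1 G c v = 0}"

text \<open>Oriented edge double: same vertices; for each edge e of G two edges (e,True) = e_+
  (oriented like e, lying over e) and (e,False) = e_- (oriented from head to tail, lying over
  the reverse of e).\<close>
definition edge_double :: "('a, 'b) pre_digraph \<Rightarrow> ('a, 'b \<times> bool) pre_digraph" where
  "edge_double G = \<lparr> verts = verts G, arcs = arcs G \<times> UNIV,
     tail = (\<lambda>(e, b). if b then tail G e else head G e),
     head = (\<lambda>(e, b). if b then head G e else tail G e) \<rparr>"

text \<open>Chain map induced by p: e_+ \<mapsto> e, e_- \<mapsto> reverse of e = -e.\<close>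
definition double_proj :: "('b \<times> bool \<Rightarrow> real) \<Rightarrow> ('b \<Rightarrow> real)" where
  "double_proj c = (\<lambda>e. c (e, True) - c (e, False))"

text \<open>Chain map induced by the involution sigma: e_+ \<mapsto> reverse of e_-, e_- \<mapsto> reverse of e_+.\<close>
definition double_inv :: "('b \<times> bool \<Rightarrow> real) \<Rightarrow> ('b \<times> bool \<Rightarrow> real)" where
  "double_inv c = (\<lambda>(e, b). - c (e, \<not> b))"

end

theory Submission
  imports Defs
begin

lemma vs_chain1: "module (chain_scale :: real \<Rightarrow> ('c \<Rightarrow> real) \<Rightarrow> _)"
  by (auto simp: module_def chain_scale_def fun_eq_iff algebra_simps)
lemma vs_chain2: "vector_space (chain_scale :: real \<Rightarrow> ('c \<Rightarrow> real) \<Rightarrow> _)"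
  by (auto simp: vector_space_def module_def chain_scale_def fun_eq_iff algebra_simps)

lemma vs_chain_old: "vector_space (chain_scale :: real \<Rightarrow> ('c \<Rightarrow> real) \<Rightarrow> _)"
  by unfold_locales (auto simp: chain_scale_def fun_eq_iff algebra_simps)

lemma boundary_sum:
  assumes "finite (arcs H)"
  shows "boundary1 H c v = (\<Sum>x\<in>arcs H. c x * ((if head H x = v then 1 else 0) - (if tail H x = v then 1 else 0)))"
  unfolding boundary1_def sum.inter_filter[OF assms] sum_subtractf[symmetric]
  by (rule sum.cong) auto

lemma bool_univ: "(UNIV :: bool set) = {True, False}" by auto

lemma boundary_double:
  assumes "finite (arcs G)"
  shows "boundary1 (edge_double G) c v = boundary1 G (double_proj c) v"
proof -
  have f: "finite (arcs (edge_double G))" using assms by (simp add: edge_double_def)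
  have "boundary1 (edge_double G) c v = (\<Sum>e\<in>arcs G. \<Sum>b\<in>UNIV. c (e,b) * ((if head (edge_double G) (e,b) = v then 1 else 0) - (if tail (edge_double G) (e,b) = v then 1 else 0)))"
    unfolding boundary_sum[OF f] sum.cartesian_product
    by (rule sum.cong) (auto simp: edge_double_def)
  also have "\<dots> = (\<Sum>e\<in>arcs G. double_proj c e * ((if head G e = v then 1 else 0) - (if tail G e = v then 1 else 0)))"
    by (rule sum.cong) (auto simp: bool_univ edge_double_def double_proj_def algebra_simps)
  also have "\<dots> = boundary1 G (double_proj c) v" using boundary_sum[OF assms] by simp
  finally show ?thesis .
qed

theorem lemma2p3:
  fixes G :: "('a, 'b) pre_digraph"
  assumes "fin_digraph G"
  defines "Hhat \<equiv> H1 (edge_double G)"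
    and "E1 \<equiv> {c \<in> H1 (edge_double G). double_inv c = c}"
    and "Em1 \<equiv> {c \<in> H1 (edge_double G). double_inv c = - c}"
  shows "E1 \<inter> Em1 = {0}
         \<and> Hhat = {a + b | a b. a \<in> E1 \<and> b \<in> Em1}
         \<and> Vector_Spaces.linear chain_scale chain_scale double_proj
         \<and> bij_betw double_proj E1 (H1 G)
         \<and> {c \<in> Hhat. double_proj c = 0} = Em1
         \<and> (\<exists>f :: ('b \<times> bool \<Rightarrow> real) \<Rightarrow> ('b \<Rightarrow> real).
           Vector_Spaces.linear chain_scale chain_scale f \<and> bij_betw f Em1 (C1 G))"
proof -
  have fa: "finite (arcs G)" using assms(1) fin_digraph.finite_arcs by blast
  have H1d: "c \<in> H1 (edge_double G) \<longleftrightarrow> c \<in> C1 (edge_double G) \<and> double_proj c \<in> H1 G" for c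
    using boundary_double[OF fa, of c]
    by (auto simp: H1_def C1_def double_proj_def) (auto simp: edge_double_def)
  have C1d: "c \<in> C1 (edge_double G) \<longleftrightarrow> (\<forall>e b. e \<notin> arcs G \<longrightarrow> c (e,b) = 0)" for c
    by (auto simp: C1_def edge_double_def)
  have inv1: "double_inv c = c \<longleftrightarrow> (\<forall>e. c (e,False) = - c (e,True))" for c :: "'b \<times> bool \<Rightarrow> real"
  proof
    assume "double_inv c = c"
    then show "\<forall>e. c (e,False) = - c (e,True)" by (auto simp: double_inv_def fun_eq_iff) (metis (full_types) add.inverse_inverse)
  next
    assume h: "\<forall>e. c (e,False) = - c (e,True)"
    show "double_inv c = c"
    proof
      fix x :: "'b \<times> bool" obtain e b where "x = (e,b)" by fastforce
      then show "double_inv c x = c x" using h by (cases b) (auto simp: double_inv_def)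
    qed
  qed
  have invm1: "double_inv c = - c \<longleftrightarrow> (\<forall>e. c (e,False) = c (e,True))" for c :: "'b \<times> bool \<Rightarrow> real"
  proof
    assume "double_inv c = - c"
    then show "\<forall>e. c (e,False) = c (e,True)" by (auto simp: double_inv_def fun_eq_iff) (metis (full_types))
  next
    assume h: "\<forall>e. c (e,False) = c (e,True)"
    show "double_inv c = - c"
    proof
      fix x :: "'b \<times> bool" obtain e b where "x = (e,b)" by fastforce
      then show "double_inv c x = (- c) x" using h by (cases b) (auto simp: double_inv_def)
    qed
  qed
  have Em1_char: "Em1 = {c. (\<forall>e b. e \<notin> arcs G \<longrightarrow> c (e,b) = 0) \<and> (\<forall>e. c (e,False) = c (e,True))}"
  proof -
    have z: "(0::'b\<Rightarrow>real) \<in> H1 G" by (simp add: H1_def C1_def boundary1_def)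
    have p0: "(\<forall>e. c (e,False) = c (e,True)) \<Longrightarrow> double_proj c = 0" for c :: "'b \<times> bool \<Rightarrow> real"
      by (simp add: double_proj_def fun_eq_iff)
    show ?thesis unfolding Em1_def H1d C1d invm1 using z p0 by auto
  qed
  have P1: "E1 \<inter> Em1 = {0}"
  proof -
    have "c = 0" if "c \<in> E1" "c \<in> Em1" for c
      using that unfolding E1_def Em1_def by (auto simp: fun_eq_iff)
    moreover have "(0::'b\<times>bool\<Rightarrow>real) \<in> E1 \<inter> Em1"
      by (simp add: E1_def Em1_def H1_def C1_def boundary1_def double_inv_def fun_eq_iff)
    ultimately show ?thesis by blast
  qed
  have P2: "Hhat = {a + b | a b. a \<in> E1 \<and> b \<in> Em1}"
  proof (intro equalityI subsetI)
    fix c assume c: "c \<in> Hhat"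
    define a where "a = (\<lambda>(e,b). (c (e,b) - c (e, \<not> b)) / 2)"
    define b where "b = (\<lambda>(e,b). (c (e,b) + c (e, \<not> b)) / 2)"
    have "double_proj a = double_proj c" by (simp add: a_def double_proj_def fun_eq_iff field_simps)
    hence "a \<in> E1" using c unfolding Hhat_def E1_def H1d C1d inv1 by (auto simp: a_def field_simps)
    moreover have "b \<in> Em1" using c unfolding Hhat_def Em1_char H1d C1d by (auto simp: b_def)
    moreover have "c = a + b" by (auto simp: a_def b_def fun_eq_iff field_simps)
    ultimately show "c \<in> {a + b | a b. a \<in> E1 \<and> b \<in> Em1}" by blast
  next
    fix c assume "c \<in> {a + b | a b. a \<in> E1 \<and> b \<in> Em1}"
    then obtain a b where ab: "a \<in> E1" "b \<in> Em1" "c = a + b" by blast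
    have "double_proj b = 0" using ab(2) unfolding Em1_char by (auto simp: double_proj_def fun_eq_iff)
    hence "double_proj c = double_proj a" using ab(3) by (auto simp: double_proj_def fun_eq_iff)
    thus "c \<in> Hhat" using ab unfolding Hhat_def E1_def Em1_char H1d C1d by auto
  qed
  have P3: "Vector_Spaces.linear chain_scale chain_scale double_proj"
    unfolding Vector_Spaces.linear_def module_hom_def module_hom_axioms_def
    by (auto simp: vs_chain1 vs_chain2 double_proj_def chain_scale_def fun_eq_iff algebra_simps)
  have P4: "bij_betw double_proj E1 (H1 G)"
  proof (rule bij_betw_byWitness[where f' = "\<lambda>y (e,b). if b then y e / 2 else - y e / 2"])
    show "\<forall>a\<in>E1. (\<lambda>y (e,b). if b then y e / 2 else - y e / 2) (double_proj a) = a"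
      unfolding E1_def inv1 by (auto simp: double_proj_def fun_eq_iff)
    show "\<forall>a'\<in>H1 G. double_proj ((\<lambda>y (e,b). if b then y e / 2 else - y e / 2) a') = a'"
      by (auto simp: double_proj_def fun_eq_iff)
    show "double_proj ` E1 \<subseteq> H1 G" unfolding E1_def H1d by auto
    show "(\<lambda>y (e,b). if b then y e / 2 else - y e / 2) ` H1 G \<subseteq> E1"
    proof
      fix c assume "c \<in> (\<lambda>y (e,b). if b then y e / 2 else - y e / 2) ` H1 G"
      then obtain y where y: "y \<in> H1 G" "c = (\<lambda>(e,b). if b then y e / 2 else - y e / 2)" by blast
      have "double_proj c = y" using y(2) by (auto simp: double_proj_def fun_eq_iff)
      thus "c \<in> E1" using y unfolding E1_def H1d C1d inv1 by (auto simp: H1_def C1_def)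
    qed
  qed
  have P5: "{c \<in> Hhat. double_proj c = 0} = Em1"
  proof -
    have "double_proj c = 0 \<longleftrightarrow> (\<forall>e. c (e,False) = c (e,True))" for c
      by (auto simp: double_proj_def fun_eq_iff)
    thus ?thesis unfolding Hhat_def Em1_def invm1 by auto
  qed
  have P6: "Vector_Spaces.linear chain_scale chain_scale (\<lambda>c e. c (e,True)) \<and> bij_betw (\<lambda>c e. c (e,True)) Em1 (C1 G)"
  proof
    show "Vector_Spaces.linear chain_scale chain_scale (\<lambda>c e. c (e,True))"
      unfolding Vector_Spaces.linear_def module_hom_def module_hom_axioms_def
      by (auto simp: vs_chain1 vs_chain2 chain_scale_def fun_eq_iff algebra_simps)
    show "bij_betw (\<lambda>c e. c (e,True)) Em1 (C1 G)"
    proof (rule bij_betw_byWitness[where f' = "\<lambda>y (e,b). y e"])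
      show "\<forall>a\<in>Em1. (\<lambda>y (e,b). y e) (\<lambda>e. a (e,True)) = a"
        unfolding Em1_char by (auto simp: fun_eq_iff) (metis (full_types))
      show "\<forall>a'\<in>C1 G. (\<lambda>c e. c (e,True)) ((\<lambda>y (e,b). y e) a') = a'" by auto
      show "(\<lambda>c e. c (e,True)) ` Em1 \<subseteq> C1 G" unfolding Em1_char by (auto simp: C1_def)
      show "(\<lambda>y (e,b). y e) ` C1 G \<subseteq> Em1" unfolding Em1_char by (auto simp: C1_def)
    qed
  qed
  show ?thesis using P1 P2 P3 P4 P5 P6 by blast
qed

end
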